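(* Let $\mathbb{F}$ be an algebraically closed field of characteristic zero and $J_2=E_{12}+E_{23}$. Let $\underline{A}=(J_2,A_2,A_3)$ and $\underline{B}=(0,B_2,B_3)$ be elements of $\mathcal{N}_3^3$ such that $f(\underline{A})=f(\underline{B})$ for all $f\in S_{3,3}$. Then $f(\underline{A})=f(\underline{B})$ for all $f\in P_{3,3}$.
   Context: $E_{ij}$ is the $3\times3$ matrix unit. $\mathcal{N}_3^3$ is the set of triples of nilpotent $3\times3$ matrices over $\mathbb{F}$. $\mathrm{tr}(Y_{i_1}\cdots Y_{i_r})$ denotes the function $\underline{A}\mapsto\mathrm{tr}(A_{i_1}\cdots A_{i_r})$. $S_{3,3}$ is the set consisting of: $\mathrm{tr}(Y_iY_j),\ \mathrm{tr}(Y_i^2Y_j),\ \mathrm{tr}(Y_iY_j^2),\ \mathrm{tr}(Y_i^2Y_j^2),\ \mathrm{tr}(Y_i^2Y_j^2Y_iY_j)$ for $1\le i<j\le3$; $\mathrm{tr}(Y_1Y_2Y_3)$, $\mathrm{tr}(Y_1Y_3Y_2)$; $\mathrm{tr}(Y_i^2Y_jY_k)$ for $\{i,j,k\}=\{1,2,3\}$; $\mathrm{tr}(Y_1^2Y_2Y_1Y_3)$, $\mathrm{tr}(Y_2^2Y_1Y_2Y_3)$, $\mathrm{tr}(Y_3^2Y_1Y_3Y_2)$. $P_{3,3}=S_{3,3}\sqcup P'_{3,3}$, where $P'_{3,3}$ consists of $\mathrm{tr}(Y_i^2Y_j^2Y_k)$ and $\mathrm{tr}(Y_i^2Y_j^2Y_iY_k)$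 for $\{i,j,k\}=\{1,2,3\}$, and $\mathrm{tr}(Y_1^2Y_2^2Y_3^2)$. *)

theory Defs
  imports "HOL-Analysis.Analysis" "HOL-Computational_Algebra.Polynomial"
begin

type_synonym 'a mat3 = "'a^3^3"

definition E :: "3 \<Rightarrow> 3 \<Rightarrow> 'a::semiring_1 mat3" where
  "E i j = (\<chi> r c. if r = i \<and> c = j then 1 else 0)"

definition J2 :: "'a::semiring_1 mat3" where
  "J2 = E 1 2 + E 2 3"

definition mat_pow :: "'a::semiring_1 mat3 \<Rightarrow> nat \<Rightarrow> 'a mat3" where
  "mat_pow A k = (((**) A) ^^ k) (mat 1)"

definition nilpotent3 :: "'a::semiring_1 mat3 \<Rightarrow> bool" where
  "nilpotent3 A \<longleftrightarrow> (\<exists>k. mat_pow A k = 0)"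

definition in_N33 :: "'a::semiring_1 mat3 list \<Rightarrow> bool" where
  "in_N33 As \<longleftrightarrow> length As = 3 \<and> (\<forall>M\<in>set As. nilpotent3 M)"

text \<open>tr(Y_{i_1}...Y_{i_r}) evaluated at a triple As = [A_1,A_2,A_3]; word indices are 1,2,3.\<close>
definition tr_word :: "nat list \<Rightarrow> 'a::semiring_1 mat3 list \<Rightarrow> 'a" where
  "tr_word w As = trace (foldr (\<lambda>i M. (As ! (i - 1)) ** M) w (mat 1))"

definition S33 :: "nat list set" where
  "S33 =
     {[i,j] | i j. 1 \<le> i \<and> i < j \<and> j \<le> 3}
   \<union> {[i,i,j] | i j. 1 \<le> i \<and> i < j \<and> j \<le> 3}
   \<union> {[i,j,j] | i j. 1 \<le> i \<and> i < j \<and> j \<le> 3}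
   \<union> {[i,i,j,j] | i j. 1 \<le> i \<and> i < j \<and> j \<le> 3}
   \<union> {[i,i,j,j,i,j] | i j. 1 \<le> i \<and> i < j \<and> j \<le> 3}
   \<union> {[1,2,3], [1,3,2]}
   \<union> {[i,i,j,k] | i j k. {i,j,k} = {1,2,3::nat}}
   \<union> {[1,1,2,1,3], [2,2,1,2,3], [3,3,1,3,2]}"

definition P33' :: "nat list set" where
  "P33' =
     {[i,i,j,j,k] | i j k. {i,j,k} = {1,2,3::nat}}
   \<union> {[i,i,j,j,i,k] | i j k. {i,j,k} = {1,2,3::nat}}
   \<union> {[1,1,2,2,3,3]}"

definition P33 :: "nat list set" where
  "P33 = S33 \<union> P33'"

end

theory Submission
  imports Defs
begin

definition upp :: "'a::semiring_1 mat3 \<Rightarrow> bool" where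
  "upp M \<longleftrightarrow> M$2$1 = 0 \<and> M$3$1 = 0 \<and> M$3$2 = 0"

definition supp :: "'a::semiring_1 mat3 \<Rightarrow> bool" where
  "supp M \<longleftrightarrow> upp M \<and> M$1$1 = 0 \<and> M$2$2 = 0 \<and> M$3$3 = 0"

lemma upp_mult: "upp M \<Longrightarrow> upp N \<Longrightarrow> upp (M ** N)"
  by (simp add: upp_def matrix_matrix_mult_def sum_3)

lemma supp_mult1: "supp M \<Longrightarrow> upp N \<Longrightarrow> supp (M ** N)"
  by (simp add: supp_def upp_def matrix_matrix_mult_def sum_3)

lemma supp_mult2: "upp M \<Longrightarrow> supp N \<Longrightarrow> supp (M ** N)"
  by (simp add: supp_def upp_def matrix_matrix_mult_def sum_3)

lemma supp_upp: "supp M \<Longrightarrow> upp M"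
  by (simp add: supp_def)

lemma upp_one: "upp (mat 1)"
  by (simp add: upp_def mat_def)

lemma trace_supp: "supp M \<Longrightarrow> trace M = 0"
  by (simp add: supp_def trace_def sum_3)

lemma word_upp:
  assumes "set w \<subseteq> {1,2,3}" "upp (As!0)" "upp (As!1)" "upp (As!2)"
  shows "upp (foldr (\<lambda>i M. (As ! (i - 1)) ** M) w (mat 1))"
  using assms(1)
proof (induction w)
  case Nil then show ?case by (simp add: upp_one)
next
  case (Cons a w)
  have "upp (As ! (a - 1))" using Cons.prems assms by auto
  then show ?case using Cons by (simp add: upp_mult)
qed

lemma word_supp:
  assumes "set w \<subseteq> {1,2,3}" "supp (As!0)" "upp (As!1)" "upp (As!2)" "1 \<in> set w"
  shows "supp (foldr (\<lambda>i M. (As ! (i - 1)) ** M) w (mat 1))"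
  using assms(1,5)
proof (induction w)
  case Nil then show ?case by simp
next
  case (Cons a w)
  have u: "upp (As ! (a - 1))" using Cons.prems assms supp_upp by auto
  show ?case
  proof (cases "a = 1")
    case True
    have "upp (foldr (\<lambda>i M. (As ! (i - 1)) ** M) w (mat 1))"
      using word_upp[of w As] Cons.prems assms supp_upp by auto
    then show ?thesis using True assms(2) by (simp add: supp_mult1)
  next
    case False
    then show ?thesis using Cons u by (simp add: supp_mult2)
  qed
qed

lemma word_zero:
  assumes "As!0 = 0" "1 \<in> set w"
  shows "foldr (\<lambda>i M. (As ! (i - 1)) ** M) w (mat 1) = (0::'a::semiring_1 mat3)"
  using assms(2)
proof (induction w)
  case Nil then show ?case by simp
next
  case (Cons a w)
  then show ?case using assms(1) by (cases "a = 1") auto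
qed

lemma set3a: "{i,j,k} = {1,2,3::nat} \<Longrightarrow> set [i,i,j,j,k] \<subseteq> {1,2,3} \<and> 1 \<in> set [i,i,j,j,k]"
proof -
  assume h: "{i,j,k} = {1,2,3::nat}"
  have "set [i,i,j,j,k] = {i,j,k}" by auto
  note e = this
  show ?thesis unfolding e h by simp
qed
lemma set3b: "{i,j,k} = {1,2,3::nat} \<Longrightarrow> set [i,i,j,j,i,k] \<subseteq> {1,2,3} \<and> 1 \<in> set [i,i,j,j,i,k]"
proof -
  assume h: "{i,j,k} = {1,2,3::nat}"
  have "set [i,i,j,j,i,k] = {i,j,k}" by auto
  note e = this
  show ?thesis unfolding e h by simp
qed
lemma P33'_props: "w \<in> P33' \<Longrightarrow> set w \<subseteq> {1,2,3} \<and> 1 \<in> set w"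
  unfolding P33'_def
proof (elim UnE)
  assume "w \<in> {[i,i,j,j,k] | i j k. {i,j,k} = {1,2,3::nat}}"
  then obtain i j k where "w = [i,i,j,j,k]" "{i,j,k} = {1,2,3::nat}" by blast
  then show ?thesis using set3a by blast
next
  assume "w \<in> {[i,i,j,j,i,k] | i j k. {i,j,k} = {1,2,3::nat}}"
  then obtain i j k where "w = [i,i,j,j,i,k]" "{i,j,k} = {1,2,3::nat}" by blast
  then show ?thesis using set3b by blast
next
  assume "w \<in> {[1,1,2,2,3,3]}"
  then show ?thesis by simp
qed

lemma trJ1: "trace (J2 ** (M::'a::field mat3)) = M$2$1 + M$3$2"
  by (simp add: trace_def sum_3 matrix_matrix_mult_def J2_def E_def)

lemma JJ: "J2 ** J2 = (E 1 3 :: 'a::field mat3)"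
  by (simp add: vec_eq_iff forall_3 matrix_matrix_mult_def sum_3 J2_def E_def)

lemma trJ2: "trace (J2 ** (J2 ** (M::'a::field mat3))) = M$3$1"
  unfolding matrix_mul_assoc JJ by (simp add: trace_def sum_3 matrix_matrix_mult_def E_def)

lemma sq31: "((M::'a::field mat3) ** M)$3$1 = M$3$1 * M$1$1 + M$3$2 * M$2$1 + M$3$3 * M$3$1"
  by (simp add: matrix_matrix_mult_def sum_3)

lemma upp_from:
  fixes X :: "'a::field mat3"
  assumes "trace (J2 ** (X ** mat 1)) = 0"
    and "trace (J2 ** (J2 ** (X ** mat 1))) = 0"
    and "trace (J2 ** (J2 ** (X ** (X ** mat 1)))) = 0"
  shows "upp X"
proof -
  have a: "X$2$1 + X$3$2 = 0" using assms(1) by (simp only: matrix_mul_rid trJ1)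
  have b: "X$3$1 = 0" using assms(2) by (simp only: matrix_mul_rid trJ2)
  have c: "X$3$1 * X$1$1 + X$3$2 * X$2$1 + X$3$3 * X$3$1 = 0" using assms(3)
    by (simp only: matrix_mul_rid trJ2 sq31)
  have "X$3$2 = - X$2$1" using a by (simp add: eq_neg_iff_add_eq_0 add.commute)
  with b c have "X$2$1 * X$2$1 = 0" by simp
  then have "X$2$1 = 0" by simp
  with a b show ?thesis by (simp add: upp_def)
qed

theorem lemma8p2:
  fixes A2 A3 B2 B3 :: "'a::{alg_closed_field, field_char_0} mat3"
  assumes "in_N33 [J2, A2, A3]"
    and "in_N33 [0, B2, B3]"
    and "\<forall>w\<in>S33. tr_word w [J2, A2, A3] = tr_word w [0, B2, B3]"
  shows "\<forall>w\<in>P33. tr_word w [J2, A2, A3] = tr_word w [0, B2, B3]"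
proof
  fix w assume w: "w \<in> P33"
  show "tr_word w [J2, A2, A3] = tr_word w [0, B2, B3]"
  proof (cases "w \<in> S33")
    case True then show ?thesis using assms(3) by blast
  next
    case False
    then have w': "w \<in> P33'" using w by (simp add: P33_def)
    have h: "\<And>v. v \<in> S33 \<Longrightarrow> 1 \<in> set v \<Longrightarrow> tr_word v [J2, A2, A3] = 0"
    proof -
      fix v assume "v \<in> S33" "1 \<in> set v"
      then have "tr_word v [J2, A2, A3] = tr_word v [0, B2, B3]" using assms(3) by blast
      also have "\<dots> = 0" unfolding tr_word_def
        using word_zero[of "[0, B2, B3]" v] \<open>1 \<in> set v\<close> by (simp add: trace_def)
      finally show "tr_word v [J2, A2, A3] = 0" .
    qed
    have s1: "[1,2] \<in> S33" "[1,1,2] \<in> S33" "[1,1,2,2] \<in> S33"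
             "[1,3] \<in> S33" "[1,1,3] \<in> S33" "[1,1,3,3] \<in> S33"
      by (simp_all add: S33_def)
    have uA2: "upp A2"
      using h[OF s1(1)] h[OF s1(2)] h[OF s1(3)]
      by (intro upp_from) (simp_all add: tr_word_def)
    have uA3: "upp A3"
      using h[OF s1(4)] h[OF s1(5)] h[OF s1(6)]
      by (intro upp_from) (simp_all add: tr_word_def)
    have sJ: "supp (J2::'a mat3)" by (simp add: supp_def upp_def J2_def E_def)
    have pr: "set w \<subseteq> {1,2,3}" "1 \<in> set w" using P33'_props[OF w'] by auto
    have "tr_word w [J2, A2, A3] = 0" unfolding tr_word_def
      using word_supp[of w "[J2, A2, A3]"] pr sJ uA2 uA3 trace_supp by simp
    moreover have "tr_word w [0, B2, B3] = 0" unfolding tr_word_def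
      using word_zero[of "[0, B2, B3]" w] pr by (simp add: trace_def)
    ultimately show ?thesis by simp
  qed
qed

end
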